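(* Let $a,\Theta\in l_0(\mathbb{Z})$ with $\Theta^\star=\Theta$ and $\det\mathcal M_{a,\Theta}(z)\not\equiv0$. Then $\det\mathcal M_{a,\Theta}(z)\le0$ for all $z\in\mathbb{T}$ if and only if $s^+_{a,\Theta}=s^-_{a,\Theta}=1$.
   Context: $l_0(\mathbb{Z})$: finitely supported sequences $u$, with $u(z)=\sum_ku(k)z^k$ and $u^\star(z)=\sum_k\overline{u(k)}z^{-k}$. $\mathbb{T}$ is the unit circle. $\mathcal M_{a,\Theta}(z)=\begin{bmatrix}\Theta(z)-\Theta(z^2)a(z)a^\star(z)&-\Theta(z^2)a(z)a^\star(-z)\\-\Theta(z^2)a(-z)a^\star(z)&\Theta(-z)-\Theta(z^2)a(-z)a^\star(-z)\end{bmatrix}$, which is Hermitian for $z\in\mathbb{T}$. $s^\pm_{a,\Theta}:=\max_{z\in\mathbb{T}}\nu_\pm(\mathcal M_{a,\Theta}(z))$ where $\nu_\pm(H)$ are the numbers of positive/negative eigenvalues of a Hermitian matrix $H$. *)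

theory Defs
  imports Complex_Main "Jordan_Normal_Form.Char_Poly"
begin

definition l0 :: "(int \<Rightarrow> complex) set" where
  "l0 = {u. finite {k. u k \<noteq> 0}}"

definition lsym :: "(int \<Rightarrow> complex) \<Rightarrow> complex \<Rightarrow> complex" where
  "lsym u z = (\<Sum>k\<in>{k. u k \<noteq> 0}. u k * z powi k)"

text \<open>The sequence u-star with symbol u-star(z) = sum_k conj(u(k)) z^(-k).\<close>
definition lstar :: "(int \<Rightarrow> complex) \<Rightarrow> (int \<Rightarrow> complex)" where
  "lstar u = (\<lambda>k. cnj (u (- k)))"

definition unit_circle :: "complex set" where
  "unit_circle = {z. cmod z = 1}"

definition Mmat :: "(int \<Rightarrow> complex) \<Rightarrow> (int \<Rightarrow> complex) \<Rightarrow> complex \<Rightarrow> complex mat" where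
  "Mmat a \<Theta> z = mat_of_rows_list 2
     [[lsym \<Theta> z - lsym \<Theta> (z^2) * lsym a z * lsym (lstar a) z,
       - lsym \<Theta> (z^2) * lsym a z * lsym (lstar a) (- z)],
      [- lsym \<Theta> (z^2) * lsym a (- z) * lsym (lstar a) z,
       lsym \<Theta> (- z) - lsym \<Theta> (z^2) * lsym a (- z) * lsym (lstar a) (- z)]]"

definition nu_pos :: "complex mat \<Rightarrow> nat" where
  "nu_pos H = (\<Sum>e\<in>{e. poly (char_poly H) e = 0 \<and> Im e = 0 \<and> Re e > 0}.
                  order e (char_poly H))"

definition nu_neg :: "complex mat \<Rightarrow> nat" where
  "nu_neg H = (\<Sum>e\<in>{e. poly (char_poly H) e = 0 \<and> Im e = 0 \<and> Re e < 0}.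
                  order e (char_poly H))"

definition s_pos :: "(int \<Rightarrow> complex) \<Rightarrow> (int \<Rightarrow> complex) \<Rightarrow> nat" where
  "s_pos a \<Theta> = Max {nu_pos (Mmat a \<Theta> z) | z. z \<in> unit_circle}"

definition s_neg :: "(int \<Rightarrow> complex) \<Rightarrow> (int \<Rightarrow> complex) \<Rightarrow> nat" where
  "s_neg a \<Theta> = Max {nu_neg (Mmat a \<Theta> z) | z. z \<in> unit_circle}"

end

theory Submission imports Defs "HOL-Complex_Analysis.Complex_Analysis" begin
hide_const (open) Determinants.det

lemma det2: fixes A :: "'a::comm_ring_1 mat" assumes "A \<in> carrier_mat 2 2"
  shows "det A = A$$(0,0)*A$$(1,1) - A$$(0,1)*A$$(1,0)"
proof -
  have "det A = (\<Sum>j<2. A $$ (0,j) * cofactor A 0 j)" by (rule laplace_expansion_row[OF assms]) auto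
  also have "\<dots> = A$$(0,0)*cofactor A 0 0 + A$$(0,1)*cofactor A 0 1"
    by (simp add: numeral_2_eq_2)
  also have "cofactor A 0 0 = A$$(1,1)" unfolding cofactor_def
    using assms by (subst det_single) (auto simp: mat_delete_def)
  also have "cofactor A 0 1 = - A$$(1,0)" unfolding cofactor_def
    using assms by (subst det_single) (auto simp: mat_delete_def)
  finally show ?thesis by simp
qed

lemma charpoly2: fixes A :: "'a::comm_ring_1 mat" assumes A: "A \<in> carrier_mat 2 2"
  shows "char_poly A = [:A$$(0,0)*A$$(1,1) - A$$(0,1)*A$$(1,0), -(A$$(0,0)+A$$(1,1)), 1:]"
proof -
  have C: "char_poly_matrix A \<in> carrier_mat 2 2" using A by simp
  show ?thesis unfolding char_poly_def det2[OF C] using A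
    by (simp add: char_poly_matrix_def algebra_simps)
qed

lemma order_lin: "order e [:-l,1:] = (if e = l then 1 else (0::nat))"
proof (cases "e = l")
  case True then show ?thesis using order_power_n_n[of l 1] by simp
next
  case False then show ?thesis by (simp add: order_0I)
qed

lemma count_roots:
  fixes l1 l2 :: "'a::idom"
  assumes p: "p = [:-l1,1:]*[:-l2,1:]"
  shows "(\<Sum>e\<in>{e. poly p e = 0 \<and> Q e}. order e p) = (if Q l1 then 1 else 0) + (if Q l2 then 1 else 0)"
proof -
  have nz: "[:-l1,1:]*[:-l2,1:] \<noteq> 0" by (simp add: no_zero_divisors)
  have ord: "order e p = (if e = l1 then 1 else 0) + (if e = l2 then 1 else 0)" for e
    unfolding p by (simp only: order_mult[OF nz] order_lin)
  have pe: "poly p e = (e - l1)*(e - l2)" for e using p by (simp add: algebra_simps)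
  have S: "{e. poly p e = 0 \<and> Q e} = {l1,l2} \<inter> {e. Q e}" unfolding pe by auto
  have "(\<Sum>e\<in>{e. poly p e = 0 \<and> Q e}. order e p) =
        (\<Sum>e\<in>{l1,l2} \<inter> {e. Q e}. (if e = l1 then 1 else 0) + (if e = l2 then 1 else 0))"
    unfolding S by (intro sum.cong refl) (simp only: ord)
  also have "\<dots> = (\<Sum>e\<in>{l1,l2} \<inter> {e. Q e}. if e = l1 then 1 else 0) + (\<Sum>e\<in>{l1,l2} \<inter> {e. Q e}. if e = l2 then 1 else 0)"
    by (rule sum.distrib)
  also have "\<dots> = (if Q l1 then 1 else 0) + (if Q l2 then 1 else 0)"
  proof -
    have fin: "finite ({l1,l2} \<inter> {e. Q e})" by simp
    show ?thesis by (simp only: sum.delta[OF fin]) auto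
  qed
  finally show ?thesis .
qed

lemma herm2:
  fixes H :: "complex mat"
  assumes A: "H \<in> carrier_mat 2 2" and h0: "Im (H$$(0,0)) = 0" and h1: "Im (H$$(1,1)) = 0"
    and hc: "H$$(1,0) = cnj (H$$(0,1))"
  shows "\<exists>r1 r2. char_poly H = [:-of_real r1,1:]*[:-of_real r2,1:] \<and> det H = of_real (r1*r2)"
proof -
  define x where "x = Re (H$$(0,0))"
  define y where "y = Re (H$$(1,1))"
  define c where "c = H$$(0,1)"
  have H0: "H$$(0,0) = of_real x" using h0 unfolding x_def by (simp add: complex_eq_iff)
  have H1: "H$$(1,1) = of_real y" using h1 unfolding y_def by (simp add: complex_eq_iff)
  have cc: "c * cnj c = of_real ((cmod c)^2)" using complex_norm_square[of c] by simp
  define s where "s = sqrt ((x-y)^2 + 4*(cmod c)^2)"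
  have s2: "s^2 = (x-y)^2 + 4*(cmod c)^2" unfolding s_def by simp
  define r1 where "r1 = (x+y+s)/2"
  define r2 where "r2 = (x+y-s)/2"
  have p: "r1*r2 = x*y - (cmod c)^2" unfolding r1_def r2_def using s2 by (simp add: field_simps power2_eq_square)
  have q: "r1 + r2 = x + y" unfolding r1_def r2_def by (simp add: field_simps)
  have det: "det H = of_real (r1*r2)"
    unfolding det2[OF A] H0 H1 hc p c_def[symmetric] using cc by simp
  have "char_poly H = [:of_real (r1*r2), -(of_real (r1+r2)), 1:]"
    unfolding charpoly2[OF A] H0 H1 hc p q c_def[symmetric] using cc by simp
  also have "\<dots> = [:-of_real r1,1:]*[:-of_real r2,1:]" by (simp add: algebra_simps)
  finally show ?thesis using det by blast
qed

lemma herm2_signs: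
  fixes H :: "complex mat"
  assumes A: "H \<in> carrier_mat 2 2" and h0: "Im (H$$(0,0)) = 0" and h1: "Im (H$$(1,1)) = 0"
    and hc: "H$$(1,0) = cnj (H$$(0,1))"
  shows "Im (det H) = 0" "nu_pos H \<le> 1 \<and> nu_neg H \<le> 1 \<longleftrightarrow> Re (det H) \<le> 0"
    "Re (det H) < 0 \<Longrightarrow> nu_pos H = 1 \<and> nu_neg H = 1"
    "nu_pos H \<le> 2" "nu_neg H \<le> 2"
proof -
  obtain r1 r2 where cp: "char_poly H = [:-of_real r1,1:]*[:-of_real r2,1:]" and d: "det H = of_real (r1*r2)"
    using herm2[OF assms] by blast
  have np: "nu_pos H = (if r1 > 0 then 1 else 0) + (if r2 > 0 then 1 else 0)"
    unfolding nu_pos_def using count_roots[OF cp, of "\<lambda>e. Im e = 0 \<and> Re e > 0"] by simp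
  have nn: "nu_neg H = (if r1 < 0 then 1 else 0) + (if r2 < 0 then 1 else 0)"
    unfolding nu_neg_def using count_roots[OF cp, of "\<lambda>e. Im e = 0 \<and> Re e < 0"] by simp
  show "Im (det H) = 0" using d by simp
  show "nu_pos H \<le> 1 \<and> nu_neg H \<le> 1 \<longleftrightarrow> Re (det H) \<le> 0"
    unfolding np nn d by (auto simp: mult_le_0_iff zero_less_mult_iff)
  show "Re (det H) < 0 \<Longrightarrow> nu_pos H = 1 \<and> nu_neg H = 1"
    unfolding np nn d by (auto simp: mult_less_0_iff)
  show "nu_pos H \<le> 2" "nu_neg H \<le> 2" unfolding np nn by auto
qed

lemma lsym_star: assumes "cmod z = 1" shows "lsym (lstar u) z = cnj (lsym u z)"
proof -
  have z0: "z \<noteq> 0" using assms by auto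
  have zz: "z * cnj z = 1" using complex_norm_square[of z] assms by simp
  have ci: "cnj z = inverse z" using inverse_unique[OF zz] by simp
  have set: "{k. lstar u k \<noteq> 0} = uminus ` {k. u k \<noteq> 0}"
    unfolding lstar_def by (auto simp: image_iff intro!: exI[of _ "-_"])
  have "lsym (lstar u) z = (\<Sum>k\<in>uminus ` {k. u k \<noteq> 0}. cnj (u (-k)) * z powi k)"
    unfolding lsym_def set by (simp add: lstar_def)
  also have "\<dots> = (\<Sum>k\<in>{k. u k \<noteq> 0}. cnj (u k) * z powi (-k))"
    by (subst sum.reindex) (auto simp: inj_on_def)
  also have "\<dots> = cnj (lsym u z)"
    unfolding lsym_def cnj_sum
    by (intro sum.cong refl) (simp add: ci power_int_minus power_int_inverse)
  finally show ?thesis .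
qed

lemma real_sym: assumes "lstar T = T" "cmod z = 1" shows "Im (lsym T z) = 0"
proof -
  have "lsym T z = cnj (lsym T z)" using lsym_star[OF assms(2), of T] assms(1) by simp
  then show ?thesis by (metis Im_complex_of_real Reals_cnj_iff Reals_cases)
qed

lemma Mmat_carrier: "Mmat a T z \<in> carrier_mat 2 2"
  unfolding Mmat_def carrier_mat_def mat_of_rows_list_def by simp

lemma Mmat_entries:
  "Mmat a T z $$ (0,0) = lsym T z - lsym T (z^2) * lsym a z * lsym (lstar a) z"
  "Mmat a T z $$ (0,1) = - lsym T (z^2) * lsym a z * lsym (lstar a) (- z)"
  "Mmat a T z $$ (1,0) = - lsym T (z^2) * lsym a (- z) * lsym (lstar a) z"
  "Mmat a T z $$ (1,1) = lsym T (- z) - lsym T (z^2) * lsym a (- z) * lsym (lstar a) (- z)"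
  unfolding Mmat_def by (simp_all add: mat_of_rows_list_def)

lemma Mmat_herm:
  assumes T: "lstar T = T" and z: "cmod z = 1"
  shows "Im (Mmat a T z $$ (0,0)) = 0" "Im (Mmat a T z $$ (1,1)) = 0"
    "Mmat a T z $$ (1,0) = cnj (Mmat a T z $$ (0,1))"
proof -
  have z': "cmod (-z) = 1" "cmod (z^2) = 1" using z by (auto simp: norm_power)
  have r: "Im (lsym T z) = 0" "Im (lsym T (-z)) = 0" "Im (lsym T (z^2)) = 0"
    using real_sym[OF T] z z' by auto
  have r2: "cnj (lsym T (z^2)) = lsym T (z^2)" using r(3) by (simp add: complex_eq_iff)
  have s: "lsym (lstar a) z = cnj (lsym a z)" "lsym (lstar a) (-z) = cnj (lsym a (-z))"
    using lsym_star z z' by auto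
  have n: "w * cnj w = of_real ((cmod w)^2)" for w using complex_norm_square[of w] by simp
  show "Im (Mmat a T z $$ (0,0)) = 0" unfolding Mmat_entries s mult.assoc n using r by simp
  show "Im (Mmat a T z $$ (1,1)) = 0" unfolding Mmat_entries s mult.assoc n using r by simp
  show "Mmat a T z $$ (1,0) = cnj (Mmat a T z $$ (0,1))" unfolding Mmat_entries s
    by (simp add: r2)
qed

lemma lsym_holo: assumes "g holomorphic_on S" "\<forall>z\<in>S. g z \<noteq> 0"
  shows "(\<lambda>z. lsym u (g z)) holomorphic_on S"
  unfolding lsym_def using assms by (intro holomorphic_intros) auto

lemma det_holo: "(\<lambda>z. det (Mmat a T z)) holomorphic_on (- {0})"
proof -
  have h1: "(\<lambda>z. lsym u z) holomorphic_on (- {0})" for u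
    using lsym_holo[of "\<lambda>z. z" "- {0}" u] by (simp add: holomorphic_on_ident)
  have h2: "(\<lambda>z. lsym u (- z)) holomorphic_on (- {0})" for u
    by (rule lsym_holo) (auto intro: holomorphic_intros)
  have h3: "(\<lambda>z. lsym u (z^2)) holomorphic_on (- {0})" for u
    by (rule lsym_holo) (auto intro: holomorphic_intros)
  show ?thesis
    unfolding det2[OF Mmat_carrier] Mmat_entries
    apply (rule holomorphic_on_diff)
    apply (rule holomorphic_on_mult)+
    apply (rule holomorphic_on_diff)
    apply (rule h1)
    apply (rule holomorphic_on_mult)+
    apply (rule h3)
    apply (rule h1)
    apply (rule h1)
    apply (rule holomorphic_on_diff h1 h2 h3 holomorphic_on_mult holomorphic_on_minus)+
    done
qed

lemma signs_at:
  assumes "lstar T = T" "z \<in> unit_circle"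
  shows "Im (det (Mmat a T z)) = 0"
    "nu_pos (Mmat a T z) \<le> 1 \<and> nu_neg (Mmat a T z) \<le> 1 \<longleftrightarrow> Re (det (Mmat a T z)) \<le> 0"
    "Re (det (Mmat a T z)) < 0 \<Longrightarrow> nu_pos (Mmat a T z) = 1 \<and> nu_neg (Mmat a T z) = 1"
    "nu_pos (Mmat a T z) \<le> 2" "nu_neg (Mmat a T z) \<le> 2"
proof -
  have z: "cmod z = 1" using assms(2) by (simp add: unit_circle_def)
  note h = herm2_signs[OF Mmat_carrier Mmat_herm[OF assms(1) z]]
  show "Im (det (Mmat a T z)) = 0" by (rule h)
  show "nu_pos (Mmat a T z) \<le> 1 \<and> nu_neg (Mmat a T z) \<le> 1 \<longleftrightarrow> Re (det (Mmat a T z)) \<le> 0" by (rule h)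
  show "Re (det (Mmat a T z)) < 0 \<Longrightarrow> nu_pos (Mmat a T z) = 1 \<and> nu_neg (Mmat a T z) = 1" by (rule h)
  show "nu_pos (Mmat a T z) \<le> 2" "nu_neg (Mmat a T z) \<le> 2" by (rule h)+
qed

lemma circle_nonzero:
  assumes "\<exists>z. z \<noteq> 0 \<and> det (Mmat a T z) \<noteq> 0"
  shows "\<exists>z\<in>unit_circle. det (Mmat a T z) \<noteq> 0"
proof (rule ccontr)
  assume "\<not> ?thesis"
  then have U0: "\<And>z. z \<in> unit_circle \<Longrightarrow> det (Mmat a T z) = 0" by blast
  have uc: "unit_circle = sphere 0 1" by (auto simp: unit_circle_def)
  have lim: "1 islimpt unit_circle" unfolding uc
  proof (rule connected_imp_perfect)
    show "connected (sphere (0::complex) 1)" by (rule connected_sphere) simp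
    show "1 \<in> sphere (0::complex) 1" by simp
    show "sphere (0::complex) 1 \<noteq> {x}" for x
    proof
      assume "sphere (0::complex) 1 = {x}"
      moreover have "1 \<in> sphere (0::complex) 1" "-1 \<in> sphere (0::complex) 1" by auto
      ultimately show False by auto
    qed
  qed
  obtain w where w: "w \<noteq> 0" "det (Mmat a T w) \<noteq> 0" using assms by blast
  have "det (Mmat a T w) = 0"
  proof (rule analytic_continuation[OF det_holo])
    show "open (- {0::complex})" by auto
    show "connected (- {0::complex})" by (rule connected_punctured_universe) simp
    show "unit_circle \<subseteq> - {0}" by (auto simp: unit_circle_def)
    show "(1::complex) \<in> - {0}" by simp
    show "1 islimpt unit_circle" by (rule lim)
    show "\<And>z. z \<in> unit_circle \<Longrightarrow> det (Mmat a T z) = 0" by (rule U0)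
    show "w \<in> - {0}" using w by simp
  qed
  then show False using w by simp
qed

theorem mainTheorem16:
  fixes a \<Theta> :: "int \<Rightarrow> complex"
  assumes "a \<in> l0" and "\<Theta> \<in> l0"
    and "lstar \<Theta> = \<Theta>"
    and "\<exists>z. z \<noteq> 0 \<and> det (Mmat a \<Theta> z) \<noteq> 0"
  shows "(\<forall>z\<in>unit_circle. Re (det (Mmat a \<Theta> z)) \<le> 0)
         \<longleftrightarrow> (s_pos a \<Theta> = 1 \<and> s_neg a \<Theta> = 1)"
proof -
  note S = signs_at[OF assms(3)]
  have finp: "finite {nu_pos (Mmat a \<Theta> z) |z. z \<in> unit_circle}"
    by (rule finite_subset[of _ "{..2}"]) (auto dest: S(4))
  have finn: "finite {nu_neg (Mmat a \<Theta> z) |z. z \<in> unit_circle}"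
    by (rule finite_subset[of _ "{..2}"]) (auto dest: S(5))
  show ?thesis
  proof
    assume H: "\<forall>z\<in>unit_circle. Re (det (Mmat a \<Theta> z)) \<le> 0"
    obtain z0 where z0: "z0 \<in> unit_circle" "det (Mmat a \<Theta> z0) \<noteq> 0"
      using circle_nonzero[OF assms(4)] by blast
    have "Re (det (Mmat a \<Theta> z0)) < 0"
      using H z0 S(1)[OF z0(1)] by (metis complex_eq_iff order_le_less zero_complex.simps)
    then have one: "nu_pos (Mmat a \<Theta> z0) = 1" "nu_neg (Mmat a \<Theta> z0) = 1" using S(3)[OF z0(1)] by auto
    have le: "nu_pos (Mmat a \<Theta> z) \<le> 1" "nu_neg (Mmat a \<Theta> z) \<le> 1" if "z \<in> unit_circle" for z
      using S(2)[OF that] H that by auto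
    show "s_pos a \<Theta> = 1 \<and> s_neg a \<Theta> = 1"
      unfolding s_pos_def s_neg_def
    proof
      show "Max {nu_pos (Mmat a \<Theta> z) |z. z \<in> unit_circle} = 1"
        by (rule Max_eqI[OF finp]) (use le one z0 in \<open>auto intro!: exI[of _ z0]\<close>)
      show "Max {nu_neg (Mmat a \<Theta> z) |z. z \<in> unit_circle} = 1"
        by (rule Max_eqI[OF finn]) (use le one z0 in \<open>auto intro!: exI[of _ z0]\<close>)
    qed
  next
    assume H: "s_pos a \<Theta> = 1 \<and> s_neg a \<Theta> = 1"
    show "\<forall>z\<in>unit_circle. Re (det (Mmat a \<Theta> z)) \<le> 0"
    proof
      fix z assume z: "z \<in> unit_circle"
      have "nu_pos (Mmat a \<Theta> z) \<le> 1"
        using Max_ge[OF finp, of "nu_pos (Mmat a \<Theta> z)"] H z unfolding s_pos_def by auto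
      moreover have "nu_neg (Mmat a \<Theta> z) \<le> 1"
        using Max_ge[OF finn, of "nu_neg (Mmat a \<Theta> z)"] H z unfolding s_neg_def by auto
      ultimately show "Re (det (Mmat a \<Theta> z)) \<le> 0" using S(2)[OF z] by auto
    qed
  qed
qed

end
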